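(* Let $a,b$ be integers and let $G\in\mathscr{G}_{a,b}$ be a graph containing a cycle and at least one pendant vertex, with base $\widetilde G$. (i) If $u\in V_{\widetilde G}$, then $d_G(u)\in\{d_{\widetilde G}(u),\,a+b-1\}$; if $u\notin V_{\widetilde G}$, then $d_G(u)=1$. (ii) If $u\in V_{\widetilde G}$ is an attached vertex, then $b\le -1$, $d_G(u)=a+b-1>d_{\widetilde G}(u)$, and $\sum_{v\in N_{\widetilde G}(u)}d_G(v)=-ab-b^2+2b+d_{\widetilde G}(u)$.
   Context: All graphs are simple and connected; $d_G(v)$ is the degree of $v$, $N_G(v)$ its neighbourhood. For integers $a,b$, $\mathscr{G}_{a,b}$ is the set of connected graphs $G$ such that for every $v\in V_G$, $\sum_{u\in N_G(v)}d_G(u)=a\,d_G(v)+b-d_G(v)^2$. A pendant vertex is a vertex of degree $1$. The base $\widetilde{G}$ of $G$ is the subgraph obtained from $G$ by repeatedly deleting pendant vertices until none remain. A vertex $u\in V_{\widetilde G}$ is called an attached vertex if it is adjacent in $G$ to some pendant vertex, and a non-attached vertex otherwise. *)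

theory Defs
  imports Main
begin

text \<open>For a vertex subset W, degrees/neighbourhoods in the induced subgraph G[W]
are obtained by passing W as the vertex set.\<close>

definition simple_graph :: "'a set \<Rightarrow> ('a \<Rightarrow> 'a \<Rightarrow> bool) \<Rightarrow> bool" where
  "simple_graph V E \<longleftrightarrow> finite V \<and> (\<forall>u v. E u v \<longrightarrow> E v u)
     \<and> (\<forall>v. \<not> E v v) \<and> (\<forall>u v. E u v \<longrightarrow> u \<in> V \<and> v \<in> V)"

definition nbhd :: "'a set \<Rightarrow> ('a \<Rightarrow> 'a \<Rightarrow> bool) \<Rightarrow> 'a \<Rightarrow> 'a set" where
  "nbhd V E v = {u \<in> V. E v u}"

definition deg :: "'a set \<Rightarrow> ('a \<Rightarrow> 'a \<Rightarrow> bool) \<Rightarrow> 'a \<Rightarrow> nat" where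
  "deg V E v = card (nbhd V E v)"

definition connected_graph :: "'a set \<Rightarrow> ('a \<Rightarrow> 'a \<Rightarrow> bool) \<Rightarrow> bool" where
  "connected_graph V E \<longleftrightarrow> V \<noteq> {} \<and>
     (\<forall>u\<in>V. \<forall>v\<in>V. (\<lambda>x y. x \<in> V \<and> y \<in> V \<and> E x y)\<^sup>*\<^sup>* u v)"

definition has_cycle :: "'a set \<Rightarrow> ('a \<Rightarrow> 'a \<Rightarrow> bool) \<Rightarrow> bool" where
  "has_cycle V E \<longleftrightarrow> (\<exists>xs. length xs \<ge> 3 \<and> distinct xs \<and> set xs \<subseteq> V
     \<and> (\<forall>i. Suc i < length xs \<longrightarrow> E (xs ! i) (xs ! Suc i))
     \<and> E (last xs) (hd xs))"

definition in_class_G :: "int \<Rightarrow> int \<Rightarrow> 'a set \<Rightarrow> ('a \<Rightarrow> 'a \<Rightarrow> bool) \<Rightarrow> bool" where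
  "in_class_G a b V E \<longleftrightarrow> simple_graph V E \<and> connected_graph V E \<and>
     (\<forall>v\<in>V. (\<Sum>u\<in>nbhd V E v. int (deg V E u))
              = a * int (deg V E v) + b - int (deg V E v) ^ 2)"

definition pendant :: "'a set \<Rightarrow> ('a \<Rightarrow> 'a \<Rightarrow> bool) \<Rightarrow> 'a \<Rightarrow> bool" where
  "pendant V E v \<longleftrightarrow> v \<in> V \<and> deg V E v = 1"

definition prune_step :: "('a \<Rightarrow> 'a \<Rightarrow> bool) \<Rightarrow> 'a set \<Rightarrow> 'a set \<Rightarrow> bool" where
  "prune_step E S T \<longleftrightarrow> (\<exists>v. pendant S E v \<and> T = S - {v})"

definition is_base :: "'a set \<Rightarrow> ('a \<Rightarrow> 'a \<Rightarrow> bool) \<Rightarrow> 'a set \<Rightarrow> bool" where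
  "is_base V E W \<longleftrightarrow> (prune_step E)\<^sup>*\<^sup>* V W \<and> (\<forall>v. \<not> pendant W E v)"

definition attached :: "'a set \<Rightarrow> ('a \<Rightarrow> 'a \<Rightarrow> bool) \<Rightarrow> 'a set \<Rightarrow> 'a \<Rightarrow> bool" where
  "attached V E W u \<longleftrightarrow> u \<in> W \<and> (\<exists>p. pendant V E p \<and> E u p)"

end

theory Submission
  imports Defs
begin

lemma fin_nbhd: "simple_graph V E \<Longrightarrow> finite (nbhd V E v)"
  unfolding simple_graph_def nbhd_def by auto

lemma deg2: assumes "simple_graph V E" "E v p" "E v q" "p \<noteq> q"
  shows "deg V E v \<ge> 2"
proof -
  have "{p,q} \<subseteq> nbhd V E v" using assms unfolding simple_graph_def nbhd_def by auto
  hence "card {p,q} \<le> deg V E v" unfolding deg_def using fin_nbhd[OF assms(1)] card_mono by blast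
  thus ?thesis using assms(4) by simp
qed

lemma cyc3: assumes sg: "simple_graph V E" and hc: "has_cycle V E"
  shows "\<exists>u v w. u \<noteq> v \<and> u \<noteq> w \<and> v \<noteq> w \<and> u\<in>V \<and> v\<in>V \<and> w\<in>V \<and>
     deg V E u \<ge> 2 \<and> deg V E v \<ge> 2 \<and> deg V E w \<ge> 2"
proof -
  obtain xs where L: "length xs \<ge> 3" and D: "distinct xs" and S: "set xs \<subseteq> V"
    and C: "\<forall>i. Suc i < length xs \<longrightarrow> E (xs ! i) (xs ! Suc i)"
    and H: "E (last xs) (hd xs)"
    using hc unfolding has_cycle_def by blast
  have sym: "\<And>u v. E u v \<Longrightarrow> E v u" using sg unfolding simple_graph_def by blast
  define n where "n = length xs"
  have ne: "xs \<noteq> []" using L by auto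
  have H': "E (xs ! (n-1)) (xs ! 0)" using H ne by (simp add: hd_conv_nth last_conv_nth n_def)
  have e01: "E (xs!0) (xs!1)" using C L by (metis One_nat_def Suc_le_eq numeral_3_eq_3 Suc_lessD)
  have e12: "E (xs!1) (xs!2)" using C L by (metis Suc_1 Suc_le_lessD numeral_3_eq_3 One_nat_def)
  have dij: "\<And>i j. i < n \<Longrightarrow> j < n \<Longrightarrow> i \<noteq> j \<Longrightarrow> xs!i \<noteq> xs!j"
    using D by (simp add: n_def nth_eq_iff_index_eq)
  have d0: "deg V E (xs!0) \<ge> 2"
    by (rule deg2[OF sg e01 sym[OF H']]) (rule dij, use L n_def in auto)
  have d1: "deg V E (xs!1) \<ge> 2"
    by (rule deg2[OF sg sym[OF e01] e12]) (rule dij, use L n_def in auto)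
  have d2: "deg V E (xs!2) \<ge> 2"
  proof (cases "n = 3")
    case True
    hence "E (xs!2) (xs!0)" using H' by simp
    thus ?thesis by (rule deg2[OF sg sym[OF e12]]) (rule dij, use L n_def in auto)
  next
    case False
    hence "E (xs!2) (xs!3)" using C L n_def by (metis Suc_le_eq eval_nat_numeral(3) le_neq_implies_less numeral_3_eq_3)
    thus ?thesis by (rule deg2[OF sg sym[OF e12]]) (rule dij, use L n_def False in auto)
  qed
  have m: "\<And>i. i < length xs \<Longrightarrow> xs!i \<in> V" using S nth_mem by blast
  have "xs!0 \<in> V" "xs!1 \<in> V" "xs!2 \<in> V" by (rule m, use L in auto)+
  moreover have "xs!0 \<noteq> xs!1" by (rule dij, use L n_def in auto)
  moreover have "xs!0 \<noteq> xs!2" by (rule dij, use L n_def in auto)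
  moreover have "xs!1 \<noteq> xs!2" by (rule dij, use L n_def in auto)
  ultimately show ?thesis using d0 d1 d2 by blast
qed

lemma closed_all: assumes "connected_graph V E" "x \<in> S" "\<And>v w. v \<in> S \<Longrightarrow> E v w \<Longrightarrow> w \<in> S"
   "x \<in> V"
  shows "V \<subseteq> S"
proof
  fix v assume "v \<in> V"
  hence "(\<lambda>x y. x \<in> V \<and> y \<in> V \<and> E x y)\<^sup>*\<^sup>* x v" using assms(1,4) unfolding connected_graph_def by blast
  thus "v \<in> S" by (induction rule: rtranclp_induct) (use assms in auto)
qed

lemma few_big: assumes "simple_graph V E" "connected_graph V E" "has_cycle V E"
  "x0 \<in> S" "x0 \<in> V" "\<And>v w. v \<in> S \<Longrightarrow> E v w \<Longrightarrow> w \<in> S"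
  "\<forall>v\<in>S - {x,y}. deg V E v \<le> 1"
  shows False
proof -
  have "V \<subseteq> S" using closed_all assms by metis
  obtain u v w where "u \<noteq> v \<and> u \<noteq> w \<and> v \<noteq> w \<and> u\<in>V \<and> v\<in>V \<and> w\<in>V \<and>
     deg V E u \<ge> 2 \<and> deg V E v \<ge> 2 \<and> deg V E w \<ge> 2" using cyc3[OF assms(1,3)] by blast
  moreover have "\<forall>t\<in>V. deg V E t \<ge> 2 \<longrightarrow> t = x \<or> t = y" 
  proof (intro ballI impI)
    fix t assume "t \<in> V" "2 \<le> deg V E t"
    thus "t = x \<or> t = y" using assms(7) \<open>V \<subseteq> S\<close> by (metis DiffI insertE singletonD subsetD numeral_le_one_iff semiring_norm(69) order_trans)
  qed
  ultimately show False by metis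
qed

lemma pend_nb: assumes "simple_graph V E" "deg V E p = 1" "E p x"
  shows "nbhd V E p = {x}"
proof -
  have "x \<in> nbhd V E p" using assms unfolding simple_graph_def nbhd_def by auto
  moreover obtain z where "nbhd V E p = {z}" using assms(2) unfolding deg_def by (metis card_1_singletonE)
  ultimately show ?thesis by auto
qed

lemma deg_att: assumes "in_class_G a b V E" "p \<in> V" "deg V E p = 1" "E p x"
  shows "int (deg V E x) = a + b - 1"
proof -
  have sg: "simple_graph V E" using assms(1) unfolding in_class_G_def by blast
  have "(\<Sum>u\<in>nbhd V E p. int (deg V E u)) = a * int (deg V E p) + b - int (deg V E p) ^ 2"
    using assms(1,2) unfolding in_class_G_def by blast
  thus ?thesis using pend_nb[OF sg assms(3,4)] assms(3) by simp
qed

lemma noA: assumes cl: "in_class_G a b V E" and hc: "has_cycle V E" and xV: "x \<in> V"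
  and d2: "deg V E x \<ge> 2" and yN: "y \<in> nbhd V E x"
  and pend: "\<forall>z\<in>nbhd V E x - {y}. deg V E z = 1"
  shows False
proof -
  have sg: "simple_graph V E" and cg: "connected_graph V E"
    and eq: "\<And>v. v \<in> V \<Longrightarrow> (\<Sum>u\<in>nbhd V E v. int (deg V E u)) = a * int (deg V E v) + b - int (deg V E v) ^ 2"
    using cl unfolding in_class_G_def by blast+
  have sym: "\<And>u v. E u v \<Longrightarrow> E v u" using sg unfolding simple_graph_def by blast
  have inV: "\<And>u v. E u v \<Longrightarrow> v \<in> V" using sg unfolding simple_graph_def by blast
  have nbE: "\<And>u v. u \<in> nbhd V E v \<longleftrightarrow> u \<in> V \<and> E v u" unfolding nbhd_def by blast
  define N where "N = nbhd V E x"
  have fN: "finite N" using fin_nbhd[OF sg] N_def by blast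
  have cN: "card N \<ge> 2" using d2 N_def deg_def by metis
  have "card (N - {y}) \<ge> 1" using cN yN N_def fN by (simp add: card_Diff_singleton)
  then obtain p where pN: "p \<in> N - {y}" by (metis card.empty empty_iff not_one_le_zero subsetI subset_empty)
  have dp: "deg V E p = 1" using pend pN N_def by blast
  have pV: "p \<in> V" and Exp: "E x p" using pN N_def nbE by auto
  define k where "k = int (deg V E x)"
  have k: "k = a + b - 1" using deg_att[OF cl pV dp sym[OF Exp]] k_def by simp
  define D where "D = int (deg V E y)"
  have "(\<Sum>u\<in>N. int (deg V E u)) = D + (\<Sum>u\<in>N - {y}. int (deg V E u))"
    using fN yN N_def D_def by (simp add: sum.remove)
  also have "(\<Sum>u\<in>N - {y}. int (deg V E u)) = (\<Sum>u\<in>N - {y}. 1)"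
    using pend N_def by (intro sum.cong) auto
  also have "\<dots> = k - 1" using fN yN N_def k_def cN by (simp add: card_Diff_singleton of_nat_diff deg_def)
  finally have ex: "D + (k - 1) = a * k + b - k^2" using eq[OF xV] N_def k_def by simp
  define M where "M = nbhd V E y"
  have fM: "finite M" using fin_nbhd[OF sg] M_def by blast
  have yV: "y \<in> V" and Exy: "E x y" using yN nbE by auto
  have xM: "x \<in> M" using M_def nbE xV sym[OF Exy] by auto
  define T where "T = (\<Sum>u\<in>M - {x}. int (deg V E u))"
  have "(\<Sum>u\<in>M. int (deg V E u)) = k + T" using fM xM k_def T_def by (simp add: sum.remove)
  hence ey: "k + T = a * D + b - D^2" using eq[OF yV] M_def D_def by simp
  have cM: "int (card (M - {x})) = D - 1" 
  proof -
    have "card M > 0" using fM xM card_gt_0_iff by blast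
    thus ?thesis using fM xM M_def D_def by (simp add: card_Diff_singleton of_nat_diff deg_def)
  qed
  have "T - (D - 1) = (k-1)*(k-2)*(-b)*(1+b)"
  proof -
    have a: "a = k + 1 - b" using k by simp
    have D: "D = a * k + b - k^2 - k + 1" using ex by simp
    have "T = a * D + b - D^2 - k" using ey by simp
    thus ?thesis unfolding D a by (simp add: algebra_simps power2_eq_square)
  qed
  moreover have "(k-1)*(k-2)*(-b)*(1+b) \<le> 0"
  proof -
    have "(k-1)*(k-2) \<ge> 0" using d2 k_def by simp
    moreover have "(-b)*(1+b) \<le> 0"
    proof (cases "b \<ge> 0")
      case True thus ?thesis by (simp add: mult_nonpos_nonneg)
    next
      case False hence "-b \<ge> 0" "1 + b \<le> 0" by auto
      thus ?thesis using mult_nonneg_nonpos by blast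
    qed
    ultimately show ?thesis by (metis mult.assoc mult_nonneg_nonpos)
  qed
  ultimately have Tle: "T \<le> D - 1" by simp
  have ge1: "\<And>z. z \<in> M \<Longrightarrow> int (deg V E z) \<ge> 1"
  proof -
    fix z assume "z \<in> M"
    hence "y \<in> nbhd V E z" using M_def nbE yV sym by auto
    hence "deg V E z \<noteq> 0" using fin_nbhd[OF sg] deg_def by (metis card_0_eq empty_iff)
    thus "int (deg V E z) \<ge> 1" by simp
  qed
  have "(\<Sum>u\<in>M - {x}. int (deg V E u) - 1) = T - (D - 1)"
    using cM T_def by (simp add: sum_subtractf)
  hence "(\<Sum>u\<in>M - {x}. int (deg V E u) - 1) = 0" using Tle
    by (smt (verit) ge1 DiffD1 sum_nonneg)
  hence pM: "\<forall>z\<in>M - {x}. deg V E z = 1"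
    
  proof -
    have "\<forall>z\<in>M - {x}. int (deg V E z) - 1 = 0"
    proof -
      have "finite (M - {x})" using fM by simp
      moreover have "\<And>u. u \<in> M - {x} \<Longrightarrow> 0 \<le> int (deg V E u) - 1" using ge1 by force
      ultimately show ?thesis using sum_nonneg_eq_0_iff[of "M - {x}" "\<lambda>u. int (deg V E u) - 1"] \<open>_ = 0\<close> by blast
    qed
    thus ?thesis by auto
  qed
  define S where "S = insert x (N \<union> M)"
  show False
  proof (rule few_big[OF sg cg hc, of x S x y])
    show "x \<in> S" "x \<in> V" using S_def xV by auto
    show "\<forall>v\<in>S - {x, y}. deg V E v \<le> 1"
    proof
      fix v assume "v \<in> S - {x,y}"
      hence "v \<in> N - {y} \<or> v \<in> M - {x}" using S_def by auto
      thus "deg V E v \<le> 1"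
      proof
        assume "v \<in> N - {y}" thus ?thesis using pend N_def by simp
      next
        assume "v \<in> M - {x}" thus ?thesis using pM by simp
      qed
    qed
    fix v w assume vS: "v \<in> S" and Evw: "E v w"
    have wV: "w \<in> V" using inV Evw .
    show "w \<in> S"
    proof (cases "v = x")
      case True thus ?thesis using Evw wV S_def N_def nbE by auto
    next
      case vx: False
      show ?thesis
      proof (cases "v = y")
        case True thus ?thesis using Evw wV S_def M_def nbE by auto
      next
        case vy: False
        show ?thesis
        proof (cases "v \<in> N")
          case True
          hence "deg V E v = 1" "E v x" using pend vy N_def nbE sym by auto
          hence "nbhd V E v = {x}" using pend_nb[OF sg] by blast
          thus ?thesis using Evw wV nbE S_def by auto
        next
          case False
          hence vM: "v \<in> M - {x}" using vS vx S_def by auto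
          hence "deg V E v = 1" "E v y" using pM M_def nbE sym by auto
          hence "nbhd V E v = {y}" using pend_nb[OF sg] by blast
          moreover have "w \<in> nbhd V E v" using Evw wV nbE by blast
          ultimately have "w = y" by blast
          thus ?thesis using S_def yN N_def by auto
        qed
      qed
    qed
  qed
qed

lemma invar: assumes "(prune_step E)\<^sup>*\<^sup>* V S" "in_class_G a b V E" "has_cycle V E"
  shows "S \<subseteq> V \<and> (\<forall>u\<in>V - S. deg V E u = 1)"
  using assms(1)
proof (induction rule: rtranclp_induct)
  case base thus ?case by simp
next
  case (step S T)
  have sg: "simple_graph V E" using assms(2) unfolding in_class_G_def by blast
  have nbE: "\<And>U u v. u \<in> nbhd U E v \<longleftrightarrow> u \<in> U \<and> E v u" unfolding nbhd_def by blast
  obtain v where pv: "pendant S E v" and T: "T = S - {v}" using step(2) unfolding prune_step_def by blast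
  have vS: "v \<in> S" and dS: "deg S E v = 1" using pv unfolding pendant_def by auto
  obtain y where ny: "nbhd S E v = {y}" using dS unfolding deg_def by (metis card_1_singletonE)
  have SV: "S \<subseteq> V" using step(3) by blast
  have vV: "v \<in> V" using vS SV by blast
  have yN: "y \<in> nbhd V E v" using ny SV nbE by (metis insertI1 subsetD)
  have rest: "\<forall>z\<in>nbhd V E v - {y}. deg V E z = 1"
  proof
    fix z assume z: "z \<in> nbhd V E v - {y}"
    have "z \<notin> S"
    proof
      assume "z \<in> S"
      hence "z \<in> nbhd S E v" using z nbE by auto
      thus False using z ny by auto
    qed
    thus "deg V E z = 1" using step(3) z nbE by auto
  qed
  have "deg V E v \<noteq> 0" using yN fin_nbhd[OF sg] deg_def by (metis card_0_eq empty_iff)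
  moreover have "\<not> deg V E v \<ge> 2" using noA[OF assms(2,3) vV _ yN rest] by blast
  ultimately have "deg V E v = 1" by linarith
  thus ?case using step(3) T by auto
qed

theorem lemma1p8:
  fixes a b :: int and V :: "'a set" and E :: "'a \<Rightarrow> 'a \<Rightarrow> bool" and W :: "'a set"
  assumes "in_class_G a b V E"
    and "has_cycle V E"
    and "\<exists>p. pendant V E p"
    and "is_base V E W"
  shows "(\<forall>u\<in>W. int (deg V E u) \<in> {int (deg W E u), a + b - 1})
       \<and> (\<forall>u\<in>V - W. deg V E u = 1)
       \<and> (\<forall>u. attached V E W u \<longrightarrow>
             b \<le> -1
           \<and> int (deg V E u) = a + b - 1
           \<and> a + b - 1 > int (deg W E u)
           \<and> (\<Sum>v\<in>nbhd W E u. int (deg V E v))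
               = - a * b - b ^ 2 + 2 * b + int (deg W E u))"
proof -
  have cl: "in_class_G a b V E" by fact
  have sg: "simple_graph V E" and cg: "connected_graph V E"
    and eq: "\<And>v. v \<in> V \<Longrightarrow> (\<Sum>u\<in>nbhd V E v. int (deg V E u)) = a * int (deg V E v) + b - int (deg V E v) ^ 2"
    using cl unfolding in_class_G_def by blast+
  have sym: "\<And>u v. E u v \<Longrightarrow> E v u" using sg unfolding simple_graph_def by blast
  have inV: "\<And>u v. E u v \<Longrightarrow> v \<in> V" using sg unfolding simple_graph_def by blast
  have nbE: "\<And>U u v. u \<in> nbhd U E v \<longleftrightarrow> u \<in> U \<and> E v u" unfolding nbhd_def by blast
  have pr: "(prune_step E)\<^sup>*\<^sup>* V W" and nop: "\<forall>v. \<not> pendant W E v"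
    using assms(4) unfolding is_base_def by auto
  have WV: "W \<subseteq> V" and P: "\<forall>u\<in>V - W. deg V E u = 1" using invar[OF pr cl assms(2)] by auto
  have nW: "\<And>u. nbhd W E u = nbhd V E u \<inter> W" using WV nbE by blast
  have fin: "\<And>U u. U \<subseteq> V \<Longrightarrow> finite (nbhd U E u)"
    using fin_nbhd[OF sg] nbE by (metis finite_subset subsetI subsetD)
  have part1: "\<forall>u\<in>W. int (deg V E u) \<in> {int (deg W E u), a + b - 1}"
  proof
    fix u assume uW: "u \<in> W"
    show "int (deg V E u) \<in> {int (deg W E u), a + b - 1}"
    proof (cases "nbhd V E u \<subseteq> W")
      case True
      hence "nbhd W E u = nbhd V E u" using nW by blast
      thus ?thesis unfolding deg_def by simp
    next
      case False
      then obtain z where z: "z \<in> nbhd V E u" "z \<notin> W" by blast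
      hence "z \<in> V" "E z u" using nbE sym by auto
      hence "int (deg V E u) = a + b - 1" using deg_att[OF cl] P z(2) by blast
      thus ?thesis by simp
    qed
  qed
  have part3: "\<forall>u. attached V E W u \<longrightarrow>
             b \<le> -1
           \<and> int (deg V E u) = a + b - 1
           \<and> a + b - 1 > int (deg W E u)
           \<and> (\<Sum>v\<in>nbhd W E u. int (deg V E v))
               = - a * b - b ^ 2 + 2 * b + int (deg W E u)"
  proof (intro allI impI)
    fix u assume "attached V E W u"
    then obtain p where uW: "u \<in> W" and pp: "pendant V E p" and Eup: "E u p"
      unfolding attached_def by blast
    have pV: "p \<in> V" and dp: "deg V E p = 1" using pp unfolding pendant_def by auto
    have uV: "u \<in> V" using uW WV by blast
    define k where "k = int (deg V E u)"
    have k: "k = a + b - 1" using deg_att[OF cl pV dp sym[OF Eup]] k_def by simp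
    have np: "nbhd V E p = {u}" using pend_nb[OF sg dp sym[OF Eup]] .
    have pW: "p \<notin> W"
    proof
      assume "p \<in> W"
      have "u \<in> nbhd W E p" using uW sym[OF Eup] nbE by blast
      moreover have "nbhd W E p \<subseteq> {u}" using np nW by blast
      ultimately have "nbhd W E p = {u}" by blast
      hence "pendant W E p" using \<open>p \<in> W\<close> unfolding pendant_def deg_def by simp
      thus False using nop by blast
    qed
    define NV where "NV = nbhd V E u"
    define NW where "NW = nbhd W E u"
    have fNV: "finite NV" using fin_nbhd[OF sg] NV_def by blast
    have sub: "NW \<subseteq> NV" using nW NW_def NV_def by blast
    have pNV: "p \<in> NV" using NV_def nbE pV Eup by blast
    have pNW: "p \<notin> NW" using pW NW_def nbE by blast
    have "card NW < card NV" using psubset_card_mono[OF fNV] sub pNV pNW by blast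
    hence lt: "a + b - 1 > int (deg W E u)" using k k_def NV_def NW_def by (simp add: deg_def)
    define dW where "dW = int (deg W E u)"
    have "(\<Sum>v\<in>NV. int (deg V E v)) = (\<Sum>v\<in>NV - NW. int (deg V E v)) + (\<Sum>v\<in>NW. int (deg V E v))"
      using sum.subset_diff[OF sub fNV] by simp
    also have "(\<Sum>v\<in>NV - NW. int (deg V E v)) = (\<Sum>v\<in>NV - NW. 1)"
    proof (rule sum.cong)
      fix v assume "v \<in> NV - NW"
      hence "v \<in> V - W" using NV_def NW_def nbE nW by auto
      thus "int (deg V E v) = 1" using P by simp
    qed simp
    also have "\<dots> = k - dW"
      using card_Diff_subset[OF finite_subset[OF sub fNV] sub] card_mono[OF fNV sub]
      by (simp add: k_def dW_def deg_def NV_def NW_def of_nat_diff)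
    finally have "(\<Sum>v\<in>NV. int (deg V E v)) = k - dW + (\<Sum>v\<in>NW. int (deg V E v))" .
    hence sumeq: "(\<Sum>v\<in>NW. int (deg V E v)) = a * k + b - k^2 - k + dW"
      using eq[OF uV] NV_def k_def by simp
    have sumf: "(\<Sum>v\<in>NW. int (deg V E v)) = - a * b - b ^ 2 + 2 * b + dW"
      using sumeq unfolding k by (simp add: algebra_simps power2_eq_square)
    have bneg: "b \<le> -1"
    proof (rule ccontr)
      assume "\<not> b \<le> -1"
      hence b0: "b \<ge> 0" by simp
      have "k \<ge> 1" using pNV fNV k_def NV_def deg_def by (metis card_0_eq empty_iff of_nat_0 of_nat_le_0_iff not_le zero_less_iff_neq_zero int_one_le_iff_zero_less)
      have s1: "(\<Sum>v\<in>NW. int (deg V E v)) \<le> dW"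
      proof -
        have "- a * b - b ^ 2 + 2 * b = - b * (k - 1)" unfolding k by (simp add: algebra_simps power2_eq_square)
        moreover have "b * (k - 1) \<ge> 0" using b0 \<open>k \<ge> 1\<close> by simp
        ultimately show ?thesis using sumf by simp
      qed
      have ge2: "\<And>v. v \<in> NW \<Longrightarrow> int (deg V E v) \<ge> 2"
      proof -
        fix v assume vNW: "v \<in> NW"
        hence vW: "v \<in> W" and Euv: "E u v" using NW_def nbE by auto
        have "u \<in> nbhd W E v" using uW sym[OF Euv] nbE by blast
        hence "deg W E v \<noteq> 0" using fin[OF WV] deg_def by (metis card_0_eq empty_iff)
        moreover have "deg W E v \<noteq> 1" using nop vW unfolding pendant_def by blast
        moreover have "deg W E v \<le> deg V E v" unfolding deg_def
          using card_mono[OF fin_nbhd[OF sg]] nW by (metis Int_lower1)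
        ultimately show "int (deg V E v) \<ge> 2" by simp
      qed
      have "(\<Sum>v\<in>NW. int (deg V E v)) \<ge> (\<Sum>v\<in>NW. 2)" using ge2 by (rule sum_mono)
      hence "2 * dW \<le> dW" using s1 by (simp add: dW_def deg_def NW_def)
      hence "NW = {}" using dW_def NW_def finite_subset[OF sub fNV] by (simp add: deg_def)
      hence allp: "\<forall>z\<in>NV. deg V E z = 1" using P NV_def NW_def nW nbE by auto
      show False
      proof (rule few_big[OF sg cg assms(2), of u "insert u NV" u u])
        show "u \<in> insert u NV" "u \<in> V" using uV by auto
        show "\<forall>v\<in>insert u NV - {u, u}. deg V E v \<le> 1" using allp by auto
        fix v w assume vS: "v \<in> insert u NV" and Evw: "E v w"
        have wV: "w \<in> V" using inV Evw .
        show "w \<in> insert u NV"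
        proof (cases "v = u")
          case True thus ?thesis using Evw wV NV_def nbE by auto
        next
          case False
          hence "v \<in> NV" using vS by auto
          hence "deg V E v = 1" "E v u" using allp NV_def nbE sym by auto
          hence "nbhd V E v = {u}" using pend_nb[OF sg] by blast
          moreover have "w \<in> nbhd V E v" using Evw wV nbE by blast
          ultimately show ?thesis by auto
        qed
      qed
    qed
    show "b \<le> -1
           \<and> int (deg V E u) = a + b - 1
           \<and> a + b - 1 > int (deg W E u)
           \<and> (\<Sum>v\<in>nbhd W E u. int (deg V E v))
               = - a * b - b ^ 2 + 2 * b + int (deg W E u)"
      using bneg k k_def lt sumf NW_def dW_def by simp
  qed
  show ?thesis using part1 P part3 by blast
qed

end
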